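(* Let the weights be $a_j=1/j$. (i) For fixed $n\ge1$ and $k\to\infty$, $k-S_{n,k}$ converges in distribution to $D_n=B_1+B_2+\cdots+B_n$, where $B_j$ are independent Bernoulli random variables with $\mathbb P\{B_j=1\}=1/j$; the law of $D_n$ is $\mathbb P\{D_n=\ell\}=\zeta_{n-1}(\{1\}_{\ell-1})/n$ for $1\le\ell\le n$. (ii) For fixed $k\ge1$ and $n\to\infty$, $S_{n,k}\to0$ in distribution.
   Context: For $\vec\ell=(\ell_1,\dots,\ell_k)$ with $n\ge\ell_1\ge\cdots\ge\ell_k\ge1$ let $\sigma(\vec\ell)=|\{1\le j\le k-1:\ell_j=\ell_{j+1}\}|$, and $\theta_{n;k}(t)=\sum_{n\ge\ell_1\ge\cdots\ge\ell_k\ge1}t^{\sigma(\vec\ell)}\prod_i\ell_i^{-1}$. $S_{n,k}$ is the random variable with $\mathbb P\{S_{n,k}=j\}=[t^j]\theta_{n;k}(t)/\theta_{n;k}(1)$. $\zeta_{m}(\{1\}_r)=\sum_{m\ge\ell_1>\cdots>\ell_r\ge1}\prod_i\ell_i^{-1}$, with $\zeta_m(\{1\}_0)=1$ (also for $m=0$). *)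

theory Defs
  imports "HOL-Probability.Probability"
begin

definition wseqs :: "nat \<Rightarrow> nat \<Rightarrow> nat list set" where
  "wseqs n k = {ls. length ls = k \<and> sorted_wrt (\<ge>) ls \<and> set ls \<subseteq> {1..n}}"

definition sseqs :: "nat \<Rightarrow> nat \<Rightarrow> nat list set" where
  "sseqs m r = {ls. length ls = r \<and> sorted_wrt (>) ls \<and> set ls \<subseteq> {1..m}}"

definition sigma :: "nat list \<Rightarrow> nat" where
  "sigma ls = card {j. Suc j < length ls \<and> ls ! j = ls ! Suc j}"

definition wt :: "nat list \<Rightarrow> real" where
  "wt ls = (\<Prod>l\<leftarrow>ls. 1 / real l)"

definition theta :: "nat \<Rightarrow> nat \<Rightarrow> real \<Rightarrow> real" where
  "theta n k t = (\<Sum>ls\<in>wseqs n k. t ^ sigma ls * wt ls)"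

definition theta_coeff :: "nat \<Rightarrow> nat \<Rightarrow> nat \<Rightarrow> real" where
  "theta_coeff n k j = (\<Sum>ls\<in>{ls\<in>wseqs n k. sigma ls = j}. wt ls)"

definition S_pmf :: "nat \<Rightarrow> nat \<Rightarrow> nat pmf" where
  "S_pmf n k = embed_pmf (\<lambda>j. theta_coeff n k j / theta n k 1)"

definition zeta1 :: "nat \<Rightarrow> nat \<Rightarrow> real" where
  "zeta1 m r = (\<Sum>ls\<in>sseqs m r. wt ls)"

primrec D_pmf :: "nat \<Rightarrow> nat pmf" where
  "D_pmf 0 = return_pmf 0"
| "D_pmf (Suc n) = do { s \<leftarrow> D_pmf n; b \<leftarrow> bernoulli_pmf (1 / real (Suc n)); return_pmf (s + of_bool b) }"

end

theory Submission imports Defs "HOL-Analysis.Harmonic_Numbers" begin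

lemma wseqs_0 [simp]: "wseqs n 0 = {[]}"
  by (auto simp: wseqs_def)

lemma wseqs_zero_Suc [simp]: "wseqs 0 (Suc k) = {}"
  by (auto simp: wseqs_def length_Suc_conv)

lemma wseqs_finite [simp]: "finite (wseqs n k)"
proof -
  have "wseqs n k \<subseteq> {xs. set xs \<subseteq> {1..n} \<and> length xs = k}" by (auto simp: wseqs_def)
  thus ?thesis by (rule finite_subset) (rule finite_lists_length_eq, simp)
qed

lemma wseqs_mono: "wseqs n k \<subseteq> wseqs (Suc n) k"
  by (auto simp: wseqs_def)

lemma wseqs_Cons: "x # ls \<in> wseqs n (Suc k) \<longleftrightarrow> ls \<in> wseqs n k \<and> 1 \<le> x \<and> x \<le> n \<and> (\<forall>y\<in>set ls. y \<le> x)"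
  by (auto simp: wseqs_def)

lemma top_eq: "wseqs (Suc n) (Suc k) - wseqs n (Suc k) = Cons (Suc n) ` wseqs (Suc n) k"
proof safe
  fix ls assume a: "ls \<in> wseqs (Suc n) (Suc k)" "ls \<notin> wseqs n (Suc k)"
  then obtain x rs where ls: "ls = x # rs" by (cases ls) (auto simp: wseqs_def)
  from a ls have rs: "rs \<in> wseqs (Suc n) k" and x: "1 \<le> x" "x \<le> Suc n" and le: "\<forall>y\<in>set rs. y \<le> x"
    by (auto simp: wseqs_Cons)
  have "x = Suc n"
  proof (rule ccontr)
    assume "x \<noteq> Suc n"
    hence "x \<le> n" using x by simp
    hence "set rs \<subseteq> {1..n}" using rs le by (force simp: wseqs_def)
    hence "ls \<in> wseqs n (Suc k)" using ls rs x le \<open>x \<le> n\<close> by (auto simp: wseqs_def)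
    thus False using a by simp
  qed
  thus "ls \<in> Cons (Suc n) ` wseqs (Suc n) k" using ls rs by simp
next
  fix rs assume "rs \<in> wseqs (Suc n) k"
  thus "Suc n # rs \<in> wseqs (Suc n) (Suc k)" by (auto simp: wseqs_def)
next
  fix rs assume "rs \<in> wseqs (Suc n) k" "Suc n # rs \<in> wseqs n (Suc k)"
  thus False by (auto simp: wseqs_def)
qed

lemma sum_wseqs_Suc:
  "(\<Sum>ls\<in>wseqs (Suc n) (Suc k). g ls) = (\<Sum>ls\<in>wseqs n (Suc k). g ls) + (\<Sum>ls\<in>wseqs (Suc n) k. g (Suc n # ls))"
proof -
  have "(\<Sum>ls\<in>wseqs (Suc n) (Suc k). g ls) = (\<Sum>ls\<in>wseqs n (Suc k). g ls) + (\<Sum>ls\<in>wseqs (Suc n) (Suc k) - wseqs n (Suc k). g ls)"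
    using wseqs_mono[of n "Suc k"] by (simp add: sum.subset_diff add.commute)
  also have "(\<Sum>ls\<in>wseqs (Suc n) (Suc k) - wseqs n (Suc k). g ls) = (\<Sum>ls\<in>wseqs (Suc n) k. g (Suc n # ls))"
    unfolding top_eq by (subst sum.reindex) (auto simp: inj_on_def)
  finally show ?thesis .
qed

lemma sum_wseqs_split:
  "(\<Sum>ls\<in>wseqs (Suc n) k. g ls) = (\<Sum>ls\<in>wseqs n k. g ls) + (\<Sum>ls\<in>wseqs (Suc n) k - wseqs n k. g ls)"
  using wseqs_mono[of n k] by (simp add: sum.subset_diff add.commute)

lemma top_hd: "ls \<in> wseqs (Suc n) k - wseqs n k \<Longrightarrow> ls \<noteq> [] \<and> hd ls = Suc n"
  by (cases k) (auto simp: top_eq)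

lemma low_hd: "ls \<in> wseqs n k \<Longrightarrow> ls \<noteq> [] \<Longrightarrow> hd ls \<noteq> Suc n"
  by (cases ls) (auto simp: wseqs_def)

lemma sigma_Nil [simp]: "sigma [] = 0"
  by (simp add: sigma_def)

lemma sigma_Cons: "sigma (x # ls) = sigma ls + (if ls \<noteq> [] \<and> hd ls = x then 1 else 0)"
proof -
  have eq: "{j. Suc j < length (x#ls) \<and> (x#ls) ! j = (x#ls) ! Suc j}
        = (if ls \<noteq> [] \<and> hd ls = x then {0} else {}) \<union> Suc ` {j. Suc j < length ls \<and> ls ! j = ls ! Suc j}"
  proof (cases ls)
    case Nil thus ?thesis by auto
  next
    case (Cons y ys)
    show ?thesis unfolding Cons
    proof (intro set_eqI)
      fix j show "j \<in> {j. Suc j < length (x # y # ys) \<and> (x # y # ys) ! j = (x # y # ys) ! Suc j} \<longleftrightarrow>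
       j \<in> (if y # ys \<noteq> [] \<and> hd (y # ys) = x then {0} else {}) \<union>
             Suc ` {j. Suc j < length (y # ys) \<and> (y # ys) ! j = (y # ys) ! Suc j}"
        by (cases j) (auto simp: inj_image_mem_iff)
    qed
  qed
  have fin: "finite {j. Suc j < length ls \<and> ls ! j = ls ! Suc j}"
    by (rule finite_subset[of _ "{..<length ls}"]) auto
  show ?thesis unfolding sigma_def eq
    using fin by (subst card_Un_disjoint) (auto simp: card_image)
qed

lemma sigma_le: "sigma ls \<le> length ls"
proof -
  have "{j. Suc j < length ls \<and> ls ! j = ls ! Suc j} \<subseteq> {..<length ls}" by auto
  thus ?thesis unfolding sigma_def by (metis card_lessThan card_mono finite_lessThan)
qed

lemma wt_Cons [simp]: "wt (x # ls) = wt ls / real x"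
  by (simp add: wt_def)

lemma wt_Nil [simp]: "wt [] = 1"
  by (simp add: wt_def)

lemma wt_pos': "set ls \<subseteq> {1..n} \<Longrightarrow> wt ls > 0"
  by (induction ls) auto

lemma wt_pos: "ls \<in> wseqs n k \<Longrightarrow> wt ls > 0"
  unfolding wseqs_def using wt_pos' by blast


subsection \<open>Strict sequences and zeta\<close>

lemma sseqs_0 [simp]: "sseqs m 0 = {[]}"
  by (auto simp: sseqs_def)

lemma sseqs_zero_Suc [simp]: "sseqs 0 (Suc r) = {}"
  by (auto simp: sseqs_def length_Suc_conv)

lemma sseqs_finite [simp]: "finite (sseqs n k)"
proof -
  have "sseqs n k \<subseteq> {xs. set xs \<subseteq> {1..n} \<and> length xs = k}" by (auto simp: sseqs_def)
  thus ?thesis by (rule finite_subset) (rule finite_lists_length_eq, simp)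
qed

lemma sseqs_mono: "sseqs n k \<subseteq> sseqs (Suc n) k"
  by (auto simp: sseqs_def)

lemma stop_eq: "sseqs (Suc n) (Suc k) - sseqs n (Suc k) = Cons (Suc n) ` sseqs n k"
proof safe
  fix ls assume a: "ls \<in> sseqs (Suc n) (Suc k)" "ls \<notin> sseqs n (Suc k)"
  then obtain x rs where ls: "ls = x # rs" by (cases ls) (auto simp: sseqs_def)
  from a ls have rs: "length rs = k" "sorted_wrt (>) rs" "set rs \<subseteq> {1..Suc n}" and x: "1 \<le> x" "x \<le> Suc n"
     and le: "\<forall>y\<in>set rs. y < x"
    by (auto simp: sseqs_def)
  have "x = Suc n"
  proof (rule ccontr)
    assume "x \<noteq> Suc n"
    hence "x \<le> n" using x by simp
    hence "set rs \<subseteq> {1..n}" using rs le by force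
    hence "ls \<in> sseqs n (Suc k)" using ls rs x le \<open>x \<le> n\<close> by (auto simp: sseqs_def)
    thus False using a by simp
  qed
  moreover have "set rs \<subseteq> {1..n}" using rs le \<open>x \<le> Suc n\<close> by force
  ultimately show "ls \<in> Cons (Suc n) ` sseqs n k" using ls rs by (auto simp: sseqs_def)
next
  fix rs assume "rs \<in> sseqs n k"
  thus "Suc n # rs \<in> sseqs (Suc n) (Suc k)" by (auto simp: sseqs_def)
next
  fix rs assume "rs \<in> sseqs n k" "Suc n # rs \<in> sseqs n (Suc k)"
  thus False by (auto simp: sseqs_def)
qed

lemma zeta1_0 [simp]: "zeta1 m 0 = 1"
  by (simp add: zeta1_def)

lemma zeta1_zero_Suc [simp]: "zeta1 0 (Suc r) = 0"
  by (simp add: zeta1_def)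

lemma zeta1_zero: "zeta1 0 r = (if r = 0 then 1 else 0)"
  by (cases r) simp_all

lemma zeta1_Suc: "zeta1 (Suc m) (Suc r) = zeta1 m (Suc r) + zeta1 m r / real (Suc m)"
proof -
  have "zeta1 (Suc m) (Suc r) = zeta1 m (Suc r) + (\<Sum>ls\<in>sseqs (Suc m) (Suc r) - sseqs m (Suc r). wt ls)"
    unfolding zeta1_def using sseqs_mono[of m "Suc r"] by (simp add: sum.subset_diff add.commute)
  also have "(\<Sum>ls\<in>sseqs (Suc m) (Suc r) - sseqs m (Suc r). wt ls) = (\<Sum>ls\<in>sseqs m r. wt ls / real (Suc m))"
    unfolding stop_eq by (subst sum.reindex) (auto simp: inj_on_def)
  also have "\<dots> = zeta1 m r / real (Suc m)" unfolding zeta1_def by (simp add: sum_divide_distrib)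
  finally show ?thesis .
qed

definition L :: "nat \<Rightarrow> nat \<Rightarrow> real" where
  "L n d = (if d = 0 then 0 else zeta1 n (d - 1))"

lemma L_Suc: "L (Suc n) d = L n d + (if d = 0 then 0 else L n (d - 1)) / real (Suc n)"
proof (cases d)
  case 0 thus ?thesis by (simp add: L_def)
next
  case (Suc d') thus ?thesis
    by (cases d') (simp_all add: L_def zeta1_Suc)
qed

subsection \<open>A linear recursion limit\<close>

lemma rec_limit:
  fixes e u :: "nat \<Rightarrow> real"
  assumes rec: "\<And>k. e (Suc k) = c * e k + u k" and c: "0 \<le> c" "c < 1" and u: "u \<longlonglongrightarrow> u0"
  shows "e \<longlonglongrightarrow> u0 / (1 - c)"
proof -
  define f where "f k = e k - u0 / (1 - c)" for k
  have frec: "f (Suc k) = c * f k + (u k - u0)" for k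
    unfolding f_def rec using c by (simp add: field_simps)
  have "f \<longlonglongrightarrow> 0"
  proof (rule LIMSEQ_I)
    fix r :: real assume r: "0 < r"
    have "r * (1 - c) / 2 > 0" using r c by simp
    from LIMSEQ_D[OF u this] obtain N where N: "\<And>k. k \<ge> N \<Longrightarrow> norm (u k - u0) < r * (1 - c) / 2" by blast
    have bound: "\<bar>f (N + j)\<bar> \<le> c ^ j * \<bar>f N\<bar> + r / 2" for j
    proof (induction j)
      case 0 thus ?case using r by simp
    next
      case (Suc j)
      have cm: "\<bar>c * f (N + j)\<bar> = c * \<bar>f (N + j)\<bar>" using c by (simp add: abs_mult)
      have "\<bar>f (N + Suc j)\<bar> = \<bar>c * f (N + j) + (u (N + j) - u0)\<bar>" by (simp add: frec)
      also have "\<dots> \<le> c * \<bar>f (N + j)\<bar> + \<bar>u (N + j) - u0\<bar>"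
        using abs_triangle_ineq[of "c * f (N + j)" "u (N + j) - u0"] cm by linarith
      also have "\<dots> \<le> c * (c ^ j * \<bar>f N\<bar> + r / 2) + r * (1 - c) / 2"
        using Suc.IH N[of "N + j"] c by (intro add_mono mult_left_mono) auto
      also have "\<dots> = c ^ Suc j * \<bar>f N\<bar> + r / 2" by (simp add: field_simps)
      finally show ?case .
    qed
    have "(\<lambda>j. c ^ j * \<bar>f N\<bar>) \<longlonglongrightarrow> 0 * \<bar>f N\<bar>"
      using c by (intro tendsto_mult LIMSEQ_power_zero tendsto_const) auto
    hence lim0: "(\<lambda>j. c ^ j * \<bar>f N\<bar>) \<longlonglongrightarrow> 0" by simp
    have "r / 2 > 0" using r by simp
    from LIMSEQ_D[OF lim0 this] obtain M where M: "\<And>j. j \<ge> M \<Longrightarrow> norm (c ^ j * \<bar>f N\<bar> - 0) < r / 2"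
      by blast
    show "\<exists>no. \<forall>n\<ge>no. norm (f n - 0) < r"
    proof (rule exI[of _ "N + M"], intro allI impI)
      fix n assume nn: "N + M \<le> n"
      define j where "j = n - N"
      have j: "n = N + j" "j \<ge> M" using nn by (simp_all add: j_def)
      have "c ^ j * \<bar>f N\<bar> < r / 2" using M[OF j(2)] c by simp
      thus "norm (f n - 0) < r" using bound[of j] j(1) by simp
    qed
  qed
  hence "(\<lambda>k. f k + u0 / (1 - c)) \<longlonglongrightarrow> 0 + u0 / (1 - c)" by (intro tendsto_add) auto
  thus ?thesis by (simp add: f_def)
qed

definition T :: "nat \<Rightarrow> nat \<Rightarrow> real" where
  "T n k = (\<Sum>ls\<in>wseqs n k. wt ls)"

definition F :: "nat \<Rightarrow> nat \<Rightarrow> nat \<Rightarrow> real" where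
  "F n k d = (\<Sum>ls\<in>wseqs n k. if sigma ls + d = k then wt ls else 0)"

definition G :: "nat \<Rightarrow> nat \<Rightarrow> nat \<Rightarrow> real" where
  "G n k d = (\<Sum>ls\<in>wseqs (Suc n) k - wseqs n k. if sigma ls + d = k then wt ls else 0)"

lemma theta1: "theta n k 1 = T n k"
  by (simp add: theta_def T_def)

lemma T_nonneg: "T n k \<ge> 0"
  unfolding T_def by (intro sum_nonneg) (auto dest: wt_pos intro: less_imp_le)

lemma T_0 [simp]: "T n 0 = 1"
  by (simp add: T_def)

lemma T_zero_Suc [simp]: "T 0 (Suc k) = 0"
  by (simp add: T_def)

lemma T_Suc: "T (Suc n) (Suc k) = T n (Suc k) + T (Suc n) k / real (Suc n)"
  unfolding T_def by (simp add: sum_wseqs_Suc sum_divide_distrib)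

lemma T_split: "T (Suc n) k = T n k + (\<Sum>ls\<in>wseqs (Suc n) k - wseqs n k. wt ls)"
  unfolding T_def by (rule sum_wseqs_split)

lemma T_mono: "T n k \<le> T (Suc n) k"
proof -
  have "0 \<le> (\<Sum>ls\<in>wseqs (Suc n) k - wseqs n k. wt ls)"
    by (rule sum_nonneg) (auto intro: less_imp_le wt_pos)
  thus ?thesis unfolding T_split by simp
qed

lemma F_Suc: "F (Suc n) k d = F n k d + G n k d"
  unfolding F_def G_def by (rule sum_wseqs_split)

lemma G_0 [simp]: "G n 0 d = 0"
  by (simp add: G_def)

lemma F_zero: "F 0 k d = (if k = 0 \<and> d = 0 then 1 else 0)"
  by (cases k) (simp_all add: F_def)

lemma sigma_wseqs: "ls \<in> wseqs n k \<Longrightarrow> sigma ls \<le> k"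
  using sigma_le[of ls] by (simp add: wseqs_def)

lemma G_Suc: "G n (Suc k) d = (G n k d + (if d = 0 then 0 else F n k (d - 1))) / real (Suc n)"
proof -
  have "G n (Suc k) d = (\<Sum>ls\<in>wseqs (Suc n) k. if sigma (Suc n # ls) + d = Suc k then wt ls / real (Suc n) else 0)"
    unfolding G_def top_eq by (subst sum.reindex) (auto simp: inj_on_def intro!: sum.cong)
  also have "\<dots> = (\<Sum>ls\<in>wseqs n k. if sigma (Suc n # ls) + d = Suc k then wt ls / real (Suc n) else 0)
      + (\<Sum>ls\<in>wseqs (Suc n) k - wseqs n k. if sigma (Suc n # ls) + d = Suc k then wt ls / real (Suc n) else 0)"
    by (rule sum_wseqs_split)
  also have "(\<Sum>ls\<in>wseqs n k. if sigma (Suc n # ls) + d = Suc k then wt ls / real (Suc n) else 0)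
     = (\<Sum>ls\<in>wseqs n k. if d = 0 then 0 else (if sigma ls + (d - 1) = k then wt ls else 0) / real (Suc n))"
  proof (rule sum.cong)
    fix ls assume ls: "ls \<in> wseqs n k"
    have s: "sigma (Suc n # ls) = sigma ls" using low_hd[OF ls] by (auto simp: sigma_Cons)
    show "(if sigma (Suc n # ls) + d = Suc k then wt ls / real (Suc n) else 0) =
          (if d = 0 then 0 else (if sigma ls + (d - 1) = k then wt ls else 0) / real (Suc n))"
      using sigma_wseqs[OF ls] unfolding s by (cases d) auto
  qed simp
  also have "\<dots> = (if d = 0 then 0 else F n k (d - 1)) / real (Suc n)"
    by (simp add: F_def sum_divide_distrib)
  also have "(\<Sum>ls\<in>wseqs (Suc n) k - wseqs n k. if sigma (Suc n # ls) + d = Suc k then wt ls / real (Suc n) else 0)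
      = G n k d / real (Suc n)"
    unfolding G_def sum_divide_distrib
  proof (rule sum.cong)
    fix ls assume ls: "ls \<in> wseqs (Suc n) k - wseqs n k"
    have s: "sigma (Suc n # ls) = sigma ls + 1" using top_hd[OF ls] by (simp add: sigma_Cons)
    show "(if sigma (Suc n # ls) + d = Suc k then wt ls / real (Suc n) else 0) =
          (if sigma ls + d = k then wt ls else 0) / real (Suc n)" unfolding s by simp
  qed simp
  finally show ?thesis by (simp add: add_divide_distrib)
qed


subsection \<open>Limits in k\<close>

lemma G_zero: "G 0 (Suc k) d = (if d = 1 then 1 else 0)"
proof (induction k)
  case 0 thus ?case by (simp add: G_Suc F_zero)
next
  case (Suc k) thus ?case by (subst G_Suc) (simp add: F_zero)
qed

lemma F_one: "F (Suc 0) (Suc k) d = (if d = 1 then 1 else 0)"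
  by (simp add: F_Suc G_zero F_zero)

lemma rec_limit':
  fixes e u :: "nat \<Rightarrow> real"
  assumes rec: "\<And>k. e (Suc k) = c * e k + u k" and c: "0 \<le> c" "c < 1" and u: "u \<longlonglongrightarrow> u0" and l: "l = u0 / (1 - c)"
  shows "e \<longlonglongrightarrow> l"
  using rec_limit[OF rec c u] l by simp

lemma F_lim: "(\<lambda>k. F (Suc n) k d) \<longlonglongrightarrow> L n d"
proof (induction n arbitrary: d)
  case 0
  have "(\<lambda>k. F (Suc 0) (Suc k) d) \<longlonglongrightarrow> L 0 d"
    by (simp add: F_one L_def zeta1_zero)
  thus ?case by (rule LIMSEQ_imp_Suc)
next
  case (Suc n)
  define c where "c = 1 / real (Suc (Suc n))"
  define X where "X = (if d = 0 then 0 else L n (d - 1))"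
  have c: "0 \<le> c" "c < 1" by (auto simp: c_def)
  have ulim: "(\<lambda>k. (if d = 0 then 0 else F (Suc n) k (d - 1)) / real (Suc (Suc n))) \<longlonglongrightarrow> X / real (Suc (Suc n))"
    unfolding X_def by (cases "d = 0") (auto intro!: tendsto_divide Suc.IH)
  have Glim: "(\<lambda>k. G (Suc n) k d) \<longlonglongrightarrow> X / real (Suc n)"
  proof (rule rec_limit'[OF _ c ulim])
    fix k show "G (Suc n) (Suc k) d = c * G (Suc n) k d + (if d = 0 then 0 else F (Suc n) k (d - 1)) / real (Suc (Suc n))"
      by (subst G_Suc) (simp add: c_def add_divide_distrib)
  next
    have "1 - c = real (Suc n) / real (Suc (Suc n))" by (simp add: c_def field_simps)
    thus "X / real (Suc n) = X / real (Suc (Suc n)) / (1 - c)"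
      by (simp del: of_nat_Suc)
  qed
  have "(\<lambda>k. F (Suc n) k d + G (Suc n) k d) \<longlonglongrightarrow> L n d + X / real (Suc n)"
    by (intro tendsto_add Suc.IH Glim)
  thus ?case by (simp add: F_Suc L_Suc[of n d] X_def)
qed

lemma T_one: "T (Suc 0) k = 1"
  by (induction k) (simp_all add: T_Suc)

lemma T_lim: "(\<lambda>k. T (Suc n) k) \<longlonglongrightarrow> real (Suc n)"
proof (induction n)
  case 0 thus ?case by (simp add: T_one)
next
  case (Suc n)
  define c where "c = 1 / real (Suc (Suc n))"
  have c: "0 \<le> c" "c < 1" by (auto simp: c_def)
  have u: "(\<lambda>k. T (Suc n) (Suc k)) \<longlonglongrightarrow> real (Suc n)"
    using Suc.IH by (rule LIMSEQ_Suc)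
  show ?case
  proof (rule rec_limit'[OF _ c u])
    fix k show "T (Suc (Suc n)) (Suc k) = c * T (Suc (Suc n)) k + T (Suc n) (Suc k)"
      by (subst T_Suc) (simp add: c_def)
  next
    show "real (Suc (Suc n)) = real (Suc n) / (1 - c)"
      by (simp add: c_def field_simps)
  qed
qed


subsection \<open>Limits in n\<close>

definition E :: "nat \<Rightarrow> nat \<Rightarrow> real" where
  "E n k = (\<Sum>ls\<in>wseqs n k. if sigma ls = 0 then wt ls else 0)"

definition R :: "nat \<Rightarrow> nat \<Rightarrow> real" where
  "R n k = (\<Sum>ls\<in>wseqs n k. if sigma ls = 0 then 0 else wt ls)"

lemma T_ER: "T n k = E n k + R n k"
  unfolding T_def E_def R_def by (subst sum.distrib[symmetric]) (rule sum.cong, auto)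

lemma R_0 [simp]: "R n 0 = 0"
  by (simp add: R_def)

lemma R_zero_Suc [simp]: "R 0 (Suc k) = 0"
  by (simp add: R_def)

lemma R_nonneg: "R n k \<ge> 0"
  unfolding R_def by (intro sum_nonneg) (auto intro: less_imp_le wt_pos)

lemma R_Suc: "R (Suc n) (Suc k) = R n (Suc k) + (R n k + (T (Suc n) k - T n k)) / real (Suc n)"
proof -
  have "R (Suc n) (Suc k) = R n (Suc k) + (\<Sum>ls\<in>wseqs (Suc n) k. if sigma (Suc n # ls) = 0 then 0 else wt ls / real (Suc n))"
    unfolding R_def sum_wseqs_Suc wt_Cons by simp
  also have "(\<Sum>ls\<in>wseqs (Suc n) k. if sigma (Suc n # ls) = 0 then 0 else wt ls / real (Suc n))
     = (\<Sum>ls\<in>wseqs n k. if sigma (Suc n # ls) = 0 then 0 else wt ls / real (Suc n))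
     + (\<Sum>ls\<in>wseqs (Suc n) k - wseqs n k. if sigma (Suc n # ls) = 0 then 0 else wt ls / real (Suc n))"
    by (rule sum_wseqs_split)
  also have "(\<Sum>ls\<in>wseqs n k. if sigma (Suc n # ls) = 0 then 0 else wt ls / real (Suc n)) = R n k / real (Suc n)"
    unfolding R_def sum_divide_distrib
  proof (rule sum.cong)
    fix ls assume ls: "ls \<in> wseqs n k"
    have s: "sigma (Suc n # ls) = sigma ls" using low_hd[OF ls] by (auto simp: sigma_Cons)
    show "(if sigma (Suc n # ls) = 0 then 0 else wt ls / real (Suc n)) = (if sigma ls = 0 then 0 else wt ls) / real (Suc n)"
      unfolding s by simp
  qed simp
  also have "(\<Sum>ls\<in>wseqs (Suc n) k - wseqs n k. if sigma (Suc n # ls) = 0 then 0 else wt ls / real (Suc n))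
      = (T (Suc n) k - T n k) / real (Suc n)"
  proof -
    have eq: "T (Suc n) k - T n k = (\<Sum>ls\<in>wseqs (Suc n) k - wseqs n k. wt ls)" by (simp add: T_split)
    have "(\<Sum>ls\<in>wseqs (Suc n) k - wseqs n k. if sigma (Suc n # ls) = 0 then 0 else wt ls / real (Suc n))
        = (\<Sum>ls\<in>wseqs (Suc n) k - wseqs n k. wt ls / real (Suc n))"
    proof (rule sum.cong)
      fix ls assume ls: "ls \<in> wseqs (Suc n) k - wseqs n k"
      have s: "sigma (Suc n # ls) = sigma ls + 1" using top_hd[OF ls] by (simp add: sigma_Cons)
      show "(if sigma (Suc n # ls) = 0 then 0 else wt ls / real (Suc n)) = wt ls / real (Suc n)"
        unfolding s by simp
    qed simp
    thus ?thesis unfolding eq sum_divide_distrib .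
  qed
  finally show ?thesis by (simp add: add_divide_distrib)
qed

lemma R_bound: "R n (Suc k) \<le> real (Suc k) * T n k"
proof (induction n arbitrary: k)
  case 0 thus ?case using T_nonneg[of 0 k] by simp
next
  case (Suc n)
  show ?case
  proof (cases k)
    case 0
    have "R n (Suc 0) \<le> 1" using Suc.IH[of 0] by simp
    thus ?thesis using 0 by (simp add: R_Suc)
  next
    case (Suc k')
    define c where "c = 1 / real (Suc n)"
    have c: "0 \<le> c" "c \<le> 1" by (auto simp: c_def)
    have Td: "T (Suc n) (Suc k') - T n (Suc k') = c * T (Suc n) k'" by (simp add: T_Suc c_def)
    have "R (Suc n) (Suc k) = R n (Suc k) + c * (R n (Suc k') + c * T (Suc n) k')"
      using Suc by (simp add: R_Suc Td c_def)
    also have "\<dots> \<le> real (Suc k) * T n k + c * (real (Suc k') * T (Suc n) k' + 1 * T (Suc n) k')"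
    proof -
      have "real (Suc k') * T n k' \<le> real (Suc k') * T (Suc n) k'" by (rule mult_left_mono[OF T_mono]) simp
      hence a: "R n (Suc k') \<le> real (Suc k') * T (Suc n) k'"
        using Suc.IH[of k'] by linarith
      have b: "c * T (Suc n) k' \<le> 1 * T (Suc n) k'" using c T_nonneg by (intro mult_right_mono) auto
      show ?thesis using Suc.IH[of k] c a b by (intro add_mono mult_left_mono) auto
    qed
    also have "\<dots> = real (Suc k) * (T n k + c * T (Suc n) k')" using Suc by (simp add: algebra_simps)
    also have "T n k + c * T (Suc n) k' = T (Suc n) k" using Suc by (simp add: T_Suc c_def)
    finally show ?thesis .
  qed
qed

lemma harm_0 [simp]: "harm 0 = (0::real)"
  by (simp add: harm_def)

lemma pow_diff_le:
  fixes a b :: real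
  assumes "0 \<le> b" "b \<le> a"
  shows "a ^ Suc m - b ^ Suc m \<le> real (Suc m) * (a - b) * a ^ m"
proof (induction m)
  case 0 thus ?case by simp
next
  case (Suc m)
  have "a ^ Suc (Suc m) - b ^ Suc (Suc m) = a * (a ^ Suc m - b ^ Suc m) + b ^ Suc m * (a - b)"
    by (simp add: algebra_simps)
  also have "\<dots> \<le> a * (real (Suc m) * (a - b) * a ^ m) + a ^ Suc m * (a - b)"
    using assms Suc.IH by (intro add_mono mult_left_mono mult_right_mono power_mono) auto
  also have "\<dots> = real (Suc (Suc m)) * (a - b) * a ^ Suc m" by (simp add: algebra_simps)
  finally show ?case .
qed

lemma T_upper: "T n k \<le> harm n ^ k"
proof (induction n arbitrary: k)
  case 0 thus ?case by (cases k) simp_all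
next
  case (Suc n)
  note IHn = Suc.IH
  show ?case
  proof (induction k)
    case 0 thus ?case by simp
  next
    case (Suc k)
    have h: "harm (Suc n) = (harm n :: real) + 1 / real (Suc n)" by (simp add: harm_Suc inverse_eq_divide)
    have hn: "0 \<le> (harm n :: real)" by (rule harm_nonneg)
    have A: "T (Suc n) (Suc k) \<le> harm n ^ Suc k + harm (Suc n) ^ k / real (Suc n)"
      unfolding T_Suc using IHn[of "Suc k"] Suc.IH
      by (intro add_mono divide_right_mono) auto
    have "(harm n :: real) ^ k \<le> harm (Suc n) ^ k" using hn h by (intro power_mono) auto
    hence B: "(harm n :: real) ^ Suc k \<le> harm n * harm (Suc n) ^ k"
      using hn by (simp add: mult_left_mono)
    have C: "(harm n :: real) * harm (Suc n) ^ k + harm (Suc n) ^ k / real (Suc n) = harm (Suc n) ^ Suc k"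
      by (simp add: h algebra_simps)
    show ?case using A B C by linarith
  qed
qed


lemma T_lower: "harm n ^ k / fact k \<le> T n k"
proof (induction n arbitrary: k)
  case 0 thus ?case by (cases k) simp_all
next
  case (Suc n)
  note IHn = Suc.IH
  show ?case
  proof (induction k)
    case 0 thus ?case by simp
  next
    case (Suc k)
    define hS :: real where "hS = harm (Suc n)"
    define hn :: real where "hn = harm n"
    have h: "hS = hn + 1 / real (Suc n)" by (simp add: hS_def hn_def harm_Suc inverse_eq_divide)
    have hn0: "0 \<le> hn" unfolding hn_def by (rule harm_nonneg)
    have P: "hS ^ Suc k - hn ^ Suc k \<le> real (Suc k) * (hS - hn) * hS ^ k"
      using hn0 h by (intro pow_diff_le) auto
    hence P': "hS ^ Suc k - hn ^ Suc k \<le> real (Suc k) * (1 / real (Suc n)) * hS ^ k" using h by simp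
    have Q: "(hS ^ Suc k - hn ^ Suc k) / fact (Suc k) \<le> real (Suc k) * (1 / real (Suc n)) * hS ^ k / fact (Suc k)"
      by (rule divide_right_mono[OF P']) simp
    have Rr: "real (Suc k) * (1 / real (Suc n)) * hS ^ k / fact (Suc k) = hS ^ k / fact k / real (Suc n)"
      by (simp add: fact_Suc field_simps del: of_nat_Suc)
    have A: "hn ^ Suc k / fact (Suc k) + hS ^ k / fact k / real (Suc n) \<le> T (Suc n) (Suc k)"
      unfolding T_Suc hn_def hS_def using IHn[of "Suc k"] Suc.IH
      by (intro add_mono divide_right_mono) auto
    have Q2: "hS ^ Suc k / fact (Suc k) - hn ^ Suc k / fact (Suc k) \<le> hS ^ k / fact k / real (Suc n)"
      using Q unfolding Rr diff_divide_distrib .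
    have "hS ^ Suc k / fact (Suc k) \<le> T (Suc n) (Suc k)"
      using A Q2 by linarith
    thus ?case by (simp add: hS_def)
  qed
qed

lemma T_pos: "n \<ge> 1 \<Longrightarrow> T n k > 0"
proof -
  assume "n \<ge> 1"
  hence "(harm n :: real) > 0" by (intro harm_pos) auto
  hence "harm n ^ k / fact k > (0::real)" by simp
  thus ?thesis using T_lower[of n k] by linarith
qed

lemma ratio_bound:
  assumes n: "n \<ge> 1"
  shows "R n (Suc k) / T n (Suc k) \<le> real (Suc k) * fact (Suc k) / harm n"
proof -
  have H: "(harm n :: real) > 0" using n by (intro harm_pos) auto
  have a: "R n (Suc k) \<le> real (Suc k) * harm n ^ k"
    using R_bound[of n k] T_upper[of n k] by (meson mult_left_mono of_nat_0_le_iff order_trans)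
  have b: "harm n ^ Suc k / fact (Suc k) \<le> T n (Suc k)" by (rule T_lower)
  have "R n (Suc k) / T n (Suc k) \<le> (real (Suc k) * harm n ^ k) / (harm n ^ Suc k / fact (Suc k))"
  proof (rule frac_le)
    show "0 \<le> real (Suc k) * harm n ^ k" by (intro mult_nonneg_nonneg zero_le_power harm_nonneg) auto
    show "0 < (harm n :: real) ^ Suc k / fact (Suc k)" using H by (intro divide_pos_pos zero_less_power) auto
  qed (use a b in auto)
  also have "\<dots> = real (Suc k) * fact (Suc k) / harm n"
    using H by (simp add: field_simps del: of_nat_Suc fact_Suc)
  finally show ?thesis .
qed

lemma part2_lim: "(\<lambda>n. E n (Suc k) / T n (Suc k)) \<longlonglongrightarrow> 1"
proof -
  have lim0: "(\<lambda>n. real (Suc k) * fact (Suc k) / harm n) \<longlonglongrightarrow> 0"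
    by (intro tendsto_divide_0[OF tendsto_const] filterlim_at_top_imp_at_infinity harm_at_top)
  have "(\<lambda>n. R n (Suc k) / T n (Suc k)) \<longlonglongrightarrow> 0"
  proof (rule tendsto_sandwich[OF _ _ tendsto_const lim0])
    show "\<forall>\<^sub>F n in sequentially. 0 \<le> R n (Suc k) / T n (Suc k)"
      using R_nonneg T_nonneg by (intro always_eventually allI divide_nonneg_nonneg) auto
    show "\<forall>\<^sub>F n in sequentially. R n (Suc k) / T n (Suc k) \<le> real (Suc k) * fact (Suc k) / harm n"
      using eventually_ge_at_top[of 1] by eventually_elim (rule ratio_bound)
  qed
  hence "(\<lambda>n. 1 - R n (Suc k) / T n (Suc k)) \<longlonglongrightarrow> 1 - 0" by (intro tendsto_diff tendsto_const)
  moreover have "\<forall>\<^sub>F n in sequentially. 1 - R n (Suc k) / T n (Suc k) = E n (Suc k) / T n (Suc k)"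
    using eventually_ge_at_top[of 1]
  proof (rule eventually_mono)
    fix n :: nat assume "n \<ge> 1"
    hence "T n (Suc k) > 0" by (rule T_pos)
    thus "1 - R n (Suc k) / T n (Suc k) = E n (Suc k) / T n (Suc k)" by (simp add: T_ER field_simps)
  qed
  ultimately show ?thesis by (simp add: tendsto_cong)
qed


subsection \<open>The pmf of S\<close>

lemma theta_coeff_alt: "theta_coeff n k j = (\<Sum>ls\<in>wseqs n k. if sigma ls = j then wt ls else 0)"
  unfolding theta_coeff_def by (simp add: sum.inter_filter)

lemma theta_coeff_nonneg: "theta_coeff n k j \<ge> 0"
  unfolding theta_coeff_alt by (intro sum_nonneg) (auto intro: less_imp_le wt_pos)

lemma theta_coeff_big: "j > k \<Longrightarrow> theta_coeff n k j = 0"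
  unfolding theta_coeff_alt by (intro sum.neutral) (auto dest: sigma_wseqs)

lemma theta_coeff_sum: "(\<Sum>j\<le>k. theta_coeff n k j) = T n k"
  unfolding theta_coeff_def T_def
  by (rule sum.group) (auto dest: sigma_wseqs)

lemma pmf_S: assumes "n \<ge> 1" shows "pmf (S_pmf n k) j = theta_coeff n k j / T n k"
proof -
  have Tp: "T n k > 0" using assms by (rule T_pos)
  have "pmf (embed_pmf (\<lambda>j. theta_coeff n k j / theta n k 1)) j = theta_coeff n k j / theta n k 1"
  proof (rule pmf_embed_pmf)
    fix x show "0 \<le> theta_coeff n k x / theta n k 1" using Tp theta_coeff_nonneg by (simp add: theta1)
  next
    have "(\<integral>\<^sup>+x. ennreal (theta_coeff n k x / theta n k 1) \<partial>count_space UNIV)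
        = (\<Sum>x\<le>k. ennreal (theta_coeff n k x / theta n k 1))"
      by (rule nn_integral_count_space') (auto simp: theta_coeff_big)
    also have "\<dots> = ennreal (\<Sum>x\<le>k. theta_coeff n k x / theta n k 1)"
      using Tp theta_coeff_nonneg by (intro sum_ennreal) (simp add: theta1)
    also have "(\<Sum>x\<le>k. theta_coeff n k x / theta n k 1) = 1"
      using Tp by (simp add: theta1 sum_divide_distrib[symmetric] theta_coeff_sum)
    finally show "(\<integral>\<^sup>+x. ennreal (theta_coeff n k x / theta n k 1) \<partial>count_space UNIV) = 1" by simp
  qed
  thus ?thesis by (simp add: S_pmf_def theta1)
qed

lemma theta_coeff_E: "theta_coeff n k 0 = E n k"
  unfolding theta_coeff_alt E_def ..

lemma theta_coeff_F: "d \<le> k \<Longrightarrow> theta_coeff n k (k - d) = F n k d"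
  unfolding theta_coeff_alt F_def
  by (intro sum.cong refl) (auto dest: sigma_wseqs)

subsection \<open>The pmf of D\<close>

lemma set_D: "set_pmf (D_pmf n) \<subseteq> {..n}"
proof (induction n)
  case 0 thus ?case by simp
next
  case (Suc n) thus ?case by (fastforce simp: of_bool_def split: if_splits)
qed

lemma pmf_inner:
  fixes p :: real
  assumes "0 \<le> p" "p \<le> 1"
  shows "pmf (bernoulli_pmf p \<bind> (\<lambda>b. return_pmf (s + of_bool b))) l
     = (if l = s then 1 - p else 0) + (if l = Suc s then p else 0)"
proof -
  have "pmf (bernoulli_pmf p \<bind> (\<lambda>b. return_pmf (s + of_bool b))) l
      = (\<Sum>b\<in>UNIV. indicator {l} (s + of_bool b) * pmf (bernoulli_pmf p) b)"
    unfolding pmf_bind pmf_return by (rule integral_measure_pmf_real) auto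
  also have "\<dots> = (if l = s then 1 - p else 0) + (if l = Suc s then p else 0)"
    using assms by (simp add: UNIV_bool indicator_def)
  finally show ?thesis .
qed

lemma sum_delta_mult: "finite A \<Longrightarrow> (\<Sum>s\<in>A. (if l = s then (c::real) else 0) * f s) = (if l \<in> A then c * f l else 0)"
proof -
  assume "finite A"
  have "(\<Sum>s\<in>A. (if l = s then c else 0) * f s) = (\<Sum>s\<in>A. if l = s then c * f s else 0)"
    by (rule sum.cong) auto
  thus ?thesis using \<open>finite A\<close> by (simp add: sum.delta)
qed

lemma pmf_D_Suc:
  "pmf (D_pmf (Suc n)) l = (1 - 1 / real (Suc n)) * pmf (D_pmf n) l
     + 1 / real (Suc n) * (if l = 0 then 0 else pmf (D_pmf n) (l - 1))"
proof -
  define p where "p = 1 / real (Suc n)"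
  have p: "0 \<le> p" "p \<le> 1" by (auto simp: p_def)
  define A where "A = insert l (insert (l - 1) {..n})"
  have A: "finite A" by (simp add: A_def)
  have "pmf (D_pmf (Suc n)) l = (\<integral>s. pmf (bernoulli_pmf p \<bind> (\<lambda>b. return_pmf (s + of_bool b))) l \<partial>measure_pmf (D_pmf n))"
    by (simp add: pmf_bind p_def)
  also have "\<dots> = (\<integral>s. (if l = s then 1 - p else 0) + (if l = Suc s then p else 0) \<partial>measure_pmf (D_pmf n))"
    using p by (simp add: pmf_inner)
  also have "\<dots> = (\<Sum>s\<in>A. ((if l = s then 1 - p else 0) + (if l = Suc s then p else 0)) * pmf (D_pmf n) s)"
    using set_D[of n] by (intro integral_measure_pmf_real A) (auto simp: A_def)
  also have "\<dots> = (\<Sum>s\<in>A. (if l = s then 1 - p else 0) * pmf (D_pmf n) s) + (\<Sum>s\<in>A. (if l = Suc s then p else 0) * pmf (D_pmf n) s)"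
    by (simp add: distrib_right sum.distrib)
  also have "(\<Sum>s\<in>A. (if l = s then 1 - p else 0) * pmf (D_pmf n) s) = (1 - p) * pmf (D_pmf n) l"
    using A by (simp add: sum_delta_mult A_def)
  also have "(\<Sum>s\<in>A. (if l = Suc s then p else 0) * pmf (D_pmf n) s) = p * (if l = 0 then 0 else pmf (D_pmf n) (l - 1))"
  proof (cases l)
    case 0 thus ?thesis by simp
  next
    case (Suc l')
    have "(\<Sum>s\<in>A. (if l = Suc s then p else 0) * pmf (D_pmf n) s) = (\<Sum>s\<in>A. (if l' = s then p else 0) * pmf (D_pmf n) s)"
      using Suc by (intro sum.cong) auto
    also have "\<dots> = p * pmf (D_pmf n) l'" using A by (simp add: sum_delta_mult A_def Suc)
    finally show ?thesis using Suc by simp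
  qed
  finally show ?thesis by (simp add: p_def)
qed

lemma pmf_D: "real (Suc n) * pmf (D_pmf (Suc n)) l = L n l"
proof (induction n arbitrary: l)
  case 0 thus ?case by (subst pmf_D_Suc) (simp add: L_def zeta1_zero indicator_def)
next
  case (Suc n)
  define X where "X = pmf (D_pmf (Suc n)) l"
  define Z where "Z = (if l = 0 then 0 else pmf (D_pmf (Suc n)) (l - 1))"
  have eq: "pmf (D_pmf (Suc (Suc n))) l = (1 - 1 / real (Suc (Suc n))) * X + 1 / real (Suc (Suc n)) * Z"
    unfolding X_def Z_def by (rule pmf_D_Suc)
  have "real (Suc (Suc n)) * pmf (D_pmf (Suc (Suc n))) l = real (Suc n) * X + Z"
  proof -
    have gen: "m \<noteq> 0 \<Longrightarrow> m * ((1 - 1 / m) * X + 1 / m * Z) = (m - 1) * X + Z" for m :: real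
      by (simp add: field_simps)
    show ?thesis unfolding eq using gen[of "real (Suc (Suc n))"] by simp
  qed
  also have "real (Suc n) * X = L n l" unfolding X_def by (rule Suc.IH)
  also have "Z = (if l = 0 then 0 else L n (l - 1)) / real (Suc n)"
    unfolding Z_def using Suc.IH[of "l - 1"] by (simp add: field_simps del: of_nat_Suc D_pmf.simps)
  finally show ?case by (simp add: L_Suc)
qed

subsection \<open>Weak convergence for finitely supported limits\<close>

lemma weak_conv_pmf:
  fixes p :: "nat \<Rightarrow> real pmf" and q :: "real pmf"
  assumes A: "finite A" "set_pmf q \<subseteq> A" and lim: "\<And>a. a \<in> A \<Longrightarrow> (\<lambda>k. pmf (p k) a) \<longlonglongrightarrow> pmf q a"
  shows "weak_conv_m (\<lambda>k. measure_pmf (p k)) (measure_pmf q)"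
  unfolding weak_conv_m_def weak_conv_def cdf_def
proof (intro allI impI)
  fix x :: real
  define B where "B = {..x} \<inter> A"
  have fB: "finite B" using A by (simp add: B_def)
  have mq: "measure (measure_pmf q) {..x} = (\<Sum>a\<in>B. pmf q a)"
  proof -
    have "measure (measure_pmf q) {..x} = measure (measure_pmf q) ({..x} \<inter> set_pmf q)"
      by (simp add: measure_Int_set_pmf)
    also have "{..x} \<inter> set_pmf q = B \<inter> set_pmf q" using A by (auto simp: B_def)
    also have "measure (measure_pmf q) \<dots> = measure (measure_pmf q) B" by (simp add: measure_Int_set_pmf)
    finally show ?thesis using fB by (simp add: measure_measure_pmf_finite)
  qed
  have limB: "(\<lambda>k. \<Sum>a\<in>B. pmf (p k) a) \<longlonglongrightarrow> (\<Sum>a\<in>B. pmf q a)"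
    by (intro tendsto_sum lim) (auto simp: B_def)
  have limA: "(\<lambda>k. \<Sum>a\<in>A. pmf (p k) a) \<longlonglongrightarrow> 1"
    using tendsto_sum[of A "\<lambda>a k. pmf (p k) a" "pmf q", OF lim] sum_pmf_eq_1[OF A] by simp
  have low: "(\<Sum>a\<in>B. pmf (p k) a) \<le> measure (measure_pmf (p k)) {..x}" for k
    using fB by (simp add: measure_measure_pmf_finite[symmetric] B_def measure_pmf.finite_measure_mono)
  have up: "measure (measure_pmf (p k)) {..x} \<le> (\<Sum>a\<in>B. pmf (p k) a) + (1 - (\<Sum>a\<in>A. pmf (p k) a))" for k
  proof -
    have "{..x} = B \<union> ({..x} - A)" by (auto simp: B_def)
    hence "measure (measure_pmf (p k)) {..x} = measure (measure_pmf (p k)) B + measure (measure_pmf (p k)) ({..x} - A)"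
      by (metis measure_pmf.finite_measure_Union sets_measure_pmf UNIV_I B_def Diff_disjoint Int_Diff Int_commute inf_bot_right)
    also have "measure (measure_pmf (p k)) ({..x} - A) \<le> measure (measure_pmf (p k)) (UNIV - A)"
      by (intro measure_pmf.finite_measure_mono) auto
    also have "measure (measure_pmf (p k)) (UNIV - A) = 1 - measure (measure_pmf (p k)) A"
      using measure_pmf.prob_compl[of A "p k"] by simp
    finally show ?thesis using fB A by (simp add: measure_measure_pmf_finite)
  qed
  show "(\<lambda>k. measure (measure_pmf (p k)) {..x}) \<longlonglongrightarrow> measure (measure_pmf q) {..x}"
    unfolding mq
  proof (rule tendsto_sandwich[OF _ _ limB])
    show "\<forall>\<^sub>F k in sequentially. (\<Sum>a\<in>B. pmf (p k) a) \<le> measure (measure_pmf (p k)) {..x}"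
      using low by simp
    show "\<forall>\<^sub>F k in sequentially. measure (measure_pmf (p k)) {..x} \<le> (\<Sum>a\<in>B. pmf (p k) a) + (1 - (\<Sum>a\<in>A. pmf (p k) a))"
      using up by simp
    have "(\<lambda>k. (\<Sum>a\<in>B. pmf (p k) a) + (1 - (\<Sum>a\<in>A. pmf (p k) a))) \<longlonglongrightarrow> (\<Sum>a\<in>B. pmf q a) + (1 - 1)"
      by (intro tendsto_add limB tendsto_diff tendsto_const limA)
    thus "(\<lambda>k. (\<Sum>a\<in>B. pmf (p k) a) + (1 - (\<Sum>a\<in>A. pmf (p k) a))) \<longlonglongrightarrow> (\<Sum>a\<in>B. pmf q a)" by simp
  qed
qed


theorem mainTheorem14:
  shows "(\<forall>n::nat. n \<ge> 1 \<longrightarrow>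
            weak_conv_m (\<lambda>k. measure_pmf (map_pmf (\<lambda>j. real k - real j) (S_pmf n k)))
                        (measure_pmf (map_pmf real (D_pmf n)))
          \<and> (\<forall>l::nat. 1 \<le> l \<and> l \<le> n \<longrightarrow> pmf (D_pmf n) l = zeta1 (n - 1) (l - 1) / real n))
       \<and> (\<forall>k::nat. k \<ge> 1 \<longrightarrow>
            weak_conv_m (\<lambda>n. measure_pmf (map_pmf real (S_pmf n k))) (measure_pmf (return_pmf (0::real))))"
proof (intro conjI allI impI)
  fix n :: nat assume n: "n \<ge> 1"
  then obtain m where m: "n = Suc m" by (cases n) auto
  have pD: "pmf (D_pmf n) d = L m d / real n" for d
    using pmf_D[of m d] unfolding m by (simp add: field_simps del: of_nat_Suc D_pmf.simps)
  show "weak_conv_m (\<lambda>k. measure_pmf (map_pmf (\<lambda>j. real k - real j) (S_pmf n k)))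
                        (measure_pmf (map_pmf real (D_pmf n)))"
  proof (rule weak_conv_pmf[where A = "real ` {..n}"])
    show "finite (real ` {..n})" by simp
    show "set_pmf (map_pmf real (D_pmf n)) \<subseteq> real ` {..n}" using set_D[of n] by auto
  next
    fix a assume "a \<in> real ` {..n}"
    then obtain d where a: "a = real d" by auto
    have q: "pmf (map_pmf real (D_pmf n)) a = L m d / real n"
      unfolding a by (simp add: pmf_map_inj' inj_on_def pD del: D_pmf.simps)
    have lim: "(\<lambda>k. F n k d / T n k) \<longlonglongrightarrow> L m d / real n"
      unfolding m by (intro tendsto_divide F_lim T_lim) auto
    have ev: "\<forall>\<^sub>F k in sequentially. F n k d / T n k = pmf (map_pmf (\<lambda>j. real k - real j) (S_pmf n k)) a"
      using eventually_ge_at_top[of d]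
    proof eventually_elim
      case (elim k)
      have "a = real k - real (k - d)" using elim a by simp
      hence "pmf (map_pmf (\<lambda>j. real k - real j) (S_pmf n k)) a = pmf (S_pmf n k) (k - d)"
        by (simp only:) (rule pmf_map_inj', auto simp: inj_on_def)
      also have "\<dots> = F n k d / T n k" using elim n by (simp add: pmf_S theta_coeff_F)
      finally show ?case ..
    qed
    show "(\<lambda>k. pmf (map_pmf (\<lambda>j. real k - real j) (S_pmf n k)) a) \<longlonglongrightarrow> pmf (map_pmf real (D_pmf n)) a"
      unfolding q using Lim_transform_eventually[OF lim ev] .
  qed
next
  fix n :: nat and l :: nat
  assume n: "n \<ge> 1" and l: "1 \<le> l \<and> l \<le> n"
  then obtain m where m: "n = Suc m" by (cases n) auto
  show "pmf (D_pmf n) l = zeta1 (n - 1) (l - 1) / real n"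
    using pmf_D[of m l] l unfolding m by (simp add: L_def field_simps del: of_nat_Suc D_pmf.simps)
next
  fix k :: nat assume k: "k \<ge> 1"
  then obtain k' where k': "k = Suc k'" by (cases k) auto
  show "weak_conv_m (\<lambda>n. measure_pmf (map_pmf real (S_pmf n k))) (measure_pmf (return_pmf (0::real)))"
  proof (rule weak_conv_pmf[where A = "{0}"])
    fix a :: real assume "a \<in> {0}"
    hence a: "a = real 0" by simp
    have ev: "\<forall>\<^sub>F n in sequentially. E n k / T n k = pmf (map_pmf real (S_pmf n k)) a"
      using eventually_ge_at_top[of 1]
    proof eventually_elim
      case (elim n)
      have "pmf (map_pmf real (S_pmf n k)) a = pmf (S_pmf n k) 0"
        unfolding a by (rule pmf_map_inj') (auto simp: inj_on_def)
      also have "\<dots> = E n k / T n k" using elim by (simp add: pmf_S theta_coeff_E)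
      finally show ?case ..
    qed
    have "(\<lambda>n. pmf (map_pmf real (S_pmf n k)) a) \<longlonglongrightarrow> 1"
      using Lim_transform_eventually[OF part2_lim[of k'] ev[unfolded k']] unfolding k' .
    thus "(\<lambda>n. pmf (map_pmf real (S_pmf n k)) a) \<longlonglongrightarrow> pmf (return_pmf 0) a" using a by simp
  qed auto
qed

end
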